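(* Assume the standing hypotheses and let $\sigma\in(0,1)$. For $(x,\lambda)\in\mathcal B((x^*,\lambda^* ),\delta)$ with $x>0,\lambda>0$, let $(\Delta x^N,\Delta\lambda^N)$ be the Newton direction for $\mu^+=\sigma\mu$ and define, for each $i$ with $x_i[\nabla^2 f(x)]_{ii}+\lambda_i\neq0$, $$\Delta x_i^S=-\frac{x_i[\nabla f(x)]_i-\mu^+}{x_i[\nabla^2 f(x)]_{ii}+\lambda_i}.$$ Then for every such $i$, $$\Delta x_i^S-\Delta x_i^N=\frac{x_i}{x_i[\nabla^2 f(x)]_{ii}+\lambda_i}\sum_{j\neq i}[\nabla^2 f(x)]_{ij}\Delta x_j^N.$$ Moreover, for every $C_1>0$ there exist $\rho>0$, $\bar\mu\in(0,\hat\mu]$ and constants $0<c\le C$ such that for all $\mu\in(0,\bar\mu]$ and all $(x,\lambda)\in\mathcal B((x^*,\lambda^* ),\delta)$ with $x>0,\lambda>0$, $\|(x,\lambda)-(x^\mu,\lambda^\mu)\|<\rho$, $\|F_\mu(x,\lambda)\|\le C_1\mu$: for all $i=1,\dots,n$, $c\le \big(x_i[\nabla^2f(x)]_{ii}+\lambda_i\big)^{-1}\le C$ (in particular the denominator is nonzero), and $|\Delta x_i^S-\Delta x_i^N|\le C\mu^2$ for all $i\in\mathcal A$.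
   Context: Problem: minimize $f(x)$ subject to $x\ge0$, $f:\mathbb R^n\to\mathbb R$ twice continuously differentiable with locally Lipschitz Hessian. Norms Euclidean; $e$ all-ones; $X=\mathrm{diag}(x)$, $\Lambda=\mathrm{diag}(\lambda)$; $F_\mu(x,\lambda)=\begin{bmatrix}\nabla f(x)-\lambda\\ \Lambda Xe-\mu e\end{bmatrix}$, $F'(x,\lambda)=\begin{bmatrix}\nabla^2f(x)&-I\\ \Lambda&X\end{bmatrix}$. The Newton direction for $\mu^+=\sigma\mu$ solves $F'(x,\lambda)(\Delta x^N,\Delta\lambda^N)=-F_{\mu^+}(x,\lambda)$. Standing hypotheses: $(x^*,\lambda^* )$ satisfies $\nabla f(x^* )=\lambda^*$, $x^*\ge0$, $\lambda^*\ge0$, $x_i^*\lambda_i^*=0$, $x^*+\lambda^*>0$, $[\nabla^2f(x^* )]_{\mathcal I\mathcal I}\succ0$, where $\mathcal A=\{i:x^*_i=0\}$, $\mathcal I=\{i:x_i^*>0\}$. $\delta>0$: $F'$ nonsingular on $\mathcal B((x^*,\lambda^* ),\delta)$ with $\|F'^{-1}\|\le M$; $\hat\mu>0$: for $\mu\in(0,\hat\mu]$ a Lipschitz barrier trajectory $(x^\mu,\lambda^\mu)\in\mathcal B((x^*,\lambda^* ),\delta)$ with $F_\mu(x^\mu,\lambda^\mu)=0$, $\|(x^\mu,\lambda^\mu)-(x^*,\lambda^* )\|\le C_4\mu$ exists. *)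

theory Defs
  imports "HOL-Analysis.Analysis"
begin

text \<open>Vectors in R^n are modelled as real^'n; g is the gradient and H the Hessian of f.
  Pairs (x, l) live in (real^'n) \<times> (real^'n), whose norm is the Euclidean norm on R^(2n).\<close>

definition Fmu :: "(real^'n::finite \<Rightarrow> real^'n) \<Rightarrow> real \<Rightarrow> real^'n \<Rightarrow> real^'n \<Rightarrow> (real^'n) \<times> (real^'n)" where
  "Fmu g mu x l = (g x - l, (\<chi> i. l$i * x$i - mu))"

definition Fprime :: "(real^'n \<Rightarrow> real^'n^'n) \<Rightarrow> real^'n \<Rightarrow> real^'n \<Rightarrow> (real^'n) \<times> (real^'n) \<Rightarrow> (real^'n) \<times> (real^'n)" where
  "Fprime H x l = (\<lambda>(dx, dl). (H x *v dx - dl, (\<chi> i. l$i * dx$i + x$i * dl$i)))"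

definition denom :: "(real^'n \<Rightarrow> real^'n^'n) \<Rightarrow> real^'n \<Rightarrow> real^'n \<Rightarrow> 'n::finite \<Rightarrow> real" where
  "denom H x l i = x$i * (H x)$i$i + l$i"

definition DxS :: "(real^'n \<Rightarrow> real^'n) \<Rightarrow> (real^'n \<Rightarrow> real^'n^'n) \<Rightarrow> real \<Rightarrow> real^'n \<Rightarrow> real^'n \<Rightarrow> 'n::finite \<Rightarrow> real" where
  "DxS g H muplus x l i = - (x$i * (g x)$i - muplus) / denom H x l i"

end

theory Submission
  imports Defs
begin


lemma newton_comp:
  assumes "Fprime H x l (dx, dl) = - Fmu g m x l"
  shows "(H x *v dx)$i - dl$i = l$i - (g x)$i" "l$i*dx$i + x$i*dl$i = m - l$i*x$i"
proof -
  from assms have e1: "H x *v dx - dl = -(g x - l)" and e2: "(\<chi> i. l$i * dx$i + x$i * dl$i) = - (\<chi> i. l$i * x$i - m)"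
    by (simp_all add: Fprime_def Fmu_def)
  from arg_cong[OF e1, of "\<lambda>v. v$i"] show "(H x *v dx)$i - dl$i = l$i - (g x)$i" by simp
  from arg_cong[OF e2, of "\<lambda>v. v$i"] show "l$i*dx$i + x$i*dl$i = m - l$i*x$i" by simp
qed

lemma newton_denom:
  assumes "Fprime H x l (dx, dl) = - Fmu g m x l"
  shows "denom H x l i * dx$i = -(x$i*(g x)$i - m) - x$i * (\<Sum>j\<in>UNIV - {i}. (H x)$i$j * dx$j)"
proof -
  have s: "(H x *v dx)$i = (H x)$i$i * dx$i + (\<Sum>j\<in>UNIV - {i}. (H x)$i$j * dx$j)"
    by (simp add: matrix_vector_mult_def sum.remove[of UNIV i])
  note c = newton_comp[OF assms, of i]
  from c(1) s have "dl$i = (H x)$i$i * dx$i + (\<Sum>j\<in>UNIV - {i}. (H x)$i$j * dx$j) - l$i + (g x)$i" by simp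
  with c(2) show ?thesis unfolding denom_def by (simp add: algebra_simps)
qed

lemma part1:
  assumes "Fprime H x l (dx, dl) = - Fmu g m x l" "denom H x l i \<noteq> 0"
  shows "DxS g H m x l i - dx$i = x$i / denom H x l i * (\<Sum>j\<in>UNIV - {i}. (H x)$i$j * dx$j)"
proof -
  have "dx$i = (-(x$i*(g x)$i - m) - x$i * (\<Sum>j\<in>UNIV - {i}. (H x)$i$j * dx$j)) / denom H x l i"
    using newton_denom[OF assms(1), of i] assms(2) by (simp add: field_simps)
  then show ?thesis unfolding DxS_def using assms(2) by (simp add: field_simps)
qed

lemma linear_Fprime: "linear (Fprime H x l)"
  unfolding Fprime_def
  by (rule linearI) (auto simp: matrix_vector_right_distrib vec_eq_iff algebra_simps matrix_vector_mult_diff_distrib case_prod_beta)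

lemma newton_bound:
  assumes "bij (Fprime H x l)" "onorm (inv (Fprime H x l)) \<le> M" "Fprime H x l p = y"
  shows "norm p \<le> M * norm y"
proof -
  have lin: "linear (inv (Fprime H x l))" using inj_linear_imp_inv_linear linear_Fprime assms(1) bij_is_inj by blast
  have "p = inv (Fprime H x l) y" using assms(1,3) bij_is_inj inv_f_f by metis
  then have "norm p \<le> onorm (inv (Fprime H x l)) * norm y" using onorm lin linear_conv_bounded_linear by metis
  also have "\<dots> \<le> M * norm y" using assms(2) by (simp add: mult_right_mono)
  finally show ?thesis .
qed
lemma M_nonneg:
  assumes "bij (Fprime H x l)" "onorm (inv (Fprime H x l)) \<le> M"
  shows "0 \<le> M"
proof -
  have lin: "linear (inv (Fprime H x l))" using inj_linear_imp_inv_linear linear_Fprime assms(1) bij_is_inj by blast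
  then have "0 \<le> onorm (inv (Fprime H x l))" using onorm_pos_le linear_conv_bounded_linear by metis
  then show ?thesis using assms(2) by simp
qed



lemma cont_nhds:
  fixes f :: "'a::metric_space \<Rightarrow> 'b::metric_space"
  assumes "continuous_on UNIV f" "e > 0"
  shows "\<forall>\<^sub>F p in nhds a. dist (f p) (f a) < e"
proof -
  have "isCont f a" using assms(1) continuous_on_eq_continuous_at open_UNIV by blast
  then have "(f \<longlongrightarrow> f a) (nhds a)" using tendsto_at_iff_tendsto_nhds isCont_def by blast
  then show ?thesis using tendstoD assms(2) by blast
qed

lemma cont_denom:
  assumes "continuous_on UNIV H"
  shows "continuous_on UNIV (\<lambda>p::((real^'n::finite) \<times> (real^'n)). denom H (fst p) (snd p) i)"
proof -
  have "continuous_on UNIV (\<lambda>p::((real^'n::finite) \<times> (real^'n)). H (fst p))"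
    by (rule continuous_on_compose2[OF assms]) (auto intro: continuous_intros)
  then show ?thesis unfolding denom_def
    by (intro continuous_intros) (auto intro: continuous_intros)
qed

lemma Hii_pos:
  fixes xs :: "real^'n::finite" and H :: "real^'n \<Rightarrow> real^'n^'n"
  assumes pd_II: "\<And>v. v \<noteq> 0 \<Longrightarrow> (\<forall>i. xs$i = 0 \<longrightarrow> v$i = 0) \<Longrightarrow> v \<bullet> (H xs *v v) > 0"
    and "xs$i > 0"
  shows "(H xs)$i$i > 0"
proof -
  have "axis i (1::real) \<noteq> 0" by (simp add: axis_eq_0_iff)
  moreover have "\<forall>j. xs$j = 0 \<longrightarrow> axis i (1::real) $ j = 0" proof (intro allI impI)
    fix j assume "xs$j = 0" then have "j \<noteq> i" using assms(2) by auto
    then show "axis i (1::real) $ j = 0" by (simp add: axis_def)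
  qed
  ultimately have "axis i 1 \<bullet> (H xs *v axis i 1) > 0" using pd_II by blast
  moreover have "axis i 1 \<bullet> (H xs *v axis i 1) = (H xs *v axis i 1) $ i" by (simp add: inner_axis')
  moreover have "(H xs *v axis i 1) $ i = H xs $ i $ i" by (simp add: matrix_vector_mult_basis column_def)
  ultimately show ?thesis by simp
qed



lemma nbhd:
  fixes xs ls :: "real^'n::finite" and H :: "real^'n \<Rightarrow> real^'n^'n"
  assumes cont: "continuous_on UNIV H"
    and pd_II: "\<And>v. v \<noteq> 0 \<Longrightarrow> (\<forall>i. xs$i = 0 \<longrightarrow> v$i = 0) \<Longrightarrow> v \<bullet> (H xs *v v) > 0"
    and xs_nonneg: "\<forall>i. xs$i \<ge> 0"
    and compl: "\<forall>i. xs$i * ls$i = 0"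
    and strict_compl: "\<forall>i. xs$i + ls$i > 0"
  shows "\<exists>m D r. 0 < m \<and> 0 < r \<and> (\<forall>x l. dist (x,l) (xs,ls) < r \<longrightarrow>
     (\<forall>i. m \<le> denom H x l i \<and> denom H x l i \<le> D) \<and> (\<forall>i. xs$i = 0 \<longrightarrow> ls$i/2 < l$i)
     \<and> norm (H x - H xs) < 1)"
proof -
  define d0 where "d0 i = denom H xs ls i" for i
  have d0pos: "d0 i > 0" for i
  proof (cases "xs$i = 0")
    case True then show ?thesis using strict_compl[rule_format, of i] by (simp add: d0_def denom_def)
  next
    case False
    then have "xs$i > 0" using xs_nonneg[rule_format, of i] by (simp add: order_le_less)
    moreover have "ls$i = 0" using compl[rule_format, of i] False by simp
    ultimately show ?thesis using Hii_pos[of xs H i, OF pd_II] by (simp add: d0_def denom_def)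
  qed
  define m0 where "m0 = Min (range d0)"
  define D0 where "D0 = Max (range d0)"
  have m0pos: "m0 > 0" unfolding m0_def using d0pos by (simp add: Min_gr_iff)
  have m0le: "m0 \<le> d0 i" for i unfolding m0_def by simp
  have D0ge: "d0 i \<le> D0" for i unfolding D0_def by simp
  have ev1: "\<forall>\<^sub>F p in nhds (xs,ls). \<forall>i. dist (denom H (fst p) (snd p) i) (d0 i) < m0/2"
  proof (rule eventually_all_finite)
    fix i
    show "\<forall>\<^sub>F p in nhds (xs,ls). dist (denom H (fst p) (snd p) i) (d0 i) < m0/2"
      using cont_nhds[OF cont_denom[OF cont, of i], of "m0/2" "(xs,ls)"] m0pos by (simp add: d0_def)
  qed
  have ev2: "\<forall>\<^sub>F p in nhds (xs,ls). \<forall>i. xs$i = 0 \<longrightarrow> ls$i/2 < snd p $ i"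
  proof (rule eventually_all_finite)
    fix i
    show "\<forall>\<^sub>F p in nhds (xs,ls). xs$i = 0 \<longrightarrow> ls$i/2 < snd p $ i"
    proof (cases "xs$i = 0")
      case True
      then have lp: "ls$i > 0" using strict_compl[rule_format, of i] by simp
      have c: "continuous_on UNIV (\<lambda>p::((real^'n) \<times> (real^'n)). snd p $ i)"
        by (intro continuous_intros)
      have "\<forall>\<^sub>F p in nhds (xs,ls). dist (snd p $ i) (ls $ i) < ls$i/2"
        using cont_nhds[OF c, of "ls$i/2" "(xs,ls)"] lp by simp
      then show ?thesis
      proof (rule eventually_mono)
        fix p :: "(real^'n) \<times> (real^'n)" assume "dist (snd p $ i) (ls $ i) < ls$i/2"
        then have "\<bar>snd p $ i - ls$i\<bar> < ls$i/2" by (simp add: dist_real_def)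
        then show "xs$i = 0 \<longrightarrow> ls$i/2 < snd p $ i" by linarith
      qed
    qed simp
  qed
  have c3: "continuous_on UNIV (\<lambda>p::((real^'n) \<times> (real^'n)). H (fst p))"
    by (rule continuous_on_compose2[OF cont]) (auto intro: continuous_intros)
  have ev3: "\<forall>\<^sub>F p in nhds (xs,ls). dist (H (fst p)) (H xs) < 1"
    using cont_nhds[OF c3, of 1 "(xs,ls)"] by simp
  have "\<forall>\<^sub>F p in nhds (xs,ls). (\<forall>i. dist (denom H (fst p) (snd p) i) (d0 i) < m0/2)
      \<and> (\<forall>i. xs$i = 0 \<longrightarrow> ls$i/2 < snd p $ i) \<and> dist (H (fst p)) (H xs) < 1"
    using ev1 ev2 ev3 by (intro eventually_conj)
  then obtain r where r: "r > 0" and rP: "\<And>p. dist p (xs,ls) < r \<Longrightarrow> (\<forall>i. dist (denom H (fst p) (snd p) i) (d0 i) < m0/2)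
      \<and> (\<forall>i. xs$i = 0 \<longrightarrow> ls$i/2 < snd p $ i) \<and> dist (H (fst p)) (H xs) < 1"
    unfolding eventually_nhds_metric by blast
  have main: "(\<forall>i. m0/2 \<le> denom H x l i \<and> denom H x l i \<le> D0 + m0/2) \<and> (\<forall>i. xs$i = 0 \<longrightarrow> ls$i/2 < l$i)
     \<and> norm (H x - H xs) < 1" if d: "dist (x,l) (xs,ls) < r" for x l
  proof -
    note P = rP[OF d, simplified]
    have A: "\<forall>i. m0/2 \<le> denom H x l i \<and> denom H x l i \<le> D0 + m0/2"
    proof
      fix i
      have "\<bar>denom H x l i - d0 i\<bar> < m0/2" using P by (simp add: dist_real_def)
      then show "m0/2 \<le> denom H x l i \<and> denom H x l i \<le> D0 + m0/2" using m0le[of i] D0ge[of i] by linarith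
    qed
    have B: "\<forall>i. xs$i = 0 \<longrightarrow> ls$i/2 < l$i" using P by simp
    have C: "norm (H x - H xs) < 1" using P by (simp add: dist_norm)
    show ?thesis using A B C by blast
  qed
  show ?thesis
    apply (rule exI[of _ "m0/2"], rule exI[of _ "D0 + m0/2"], rule exI[of _ r])
    using main m0pos r by simp
qed


theorem proposition1:
  fixes f :: "real^'n \<Rightarrow> real"
    and g :: "real^'n \<Rightarrow> real^'n"
    and H :: "real^'n \<Rightarrow> real^'n^'n"
    and xs ls :: "real^'n"
    and \<delta> M \<mu>hat C4 \<sigma> :: real
    and xmu lmu :: "real \<Rightarrow> real^'n"
  assumes grad: "\<And>x. (f has_derivative (\<lambda>h. g x \<bullet> h)) (at x)"
    and hess: "\<And>x. (g has_derivative (\<lambda>h. H x *v h)) (at x)"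
    and hess_cont: "continuous_on UNIV H"
    and hess_loclip: "\<And>x. \<exists>r>0. \<exists>L. \<forall>y\<in>ball x r. \<forall>z\<in>ball x r. norm (H y - H z) \<le> L * norm (y - z)"
    and kkt_grad: "g xs = ls"
    and xs_nonneg: "\<forall>i. xs$i \<ge> 0"
    and ls_nonneg: "\<forall>i. ls$i \<ge> 0"
    and compl: "\<forall>i. xs$i * ls$i = 0"
    and strict_compl: "\<forall>i. xs$i + ls$i > 0"
    and pd_II: "\<And>v. v \<noteq> 0 \<Longrightarrow> (\<forall>i. xs$i = 0 \<longrightarrow> v$i = 0) \<Longrightarrow> v \<bullet> (H xs *v v) > 0"
    and \<delta>_pos: "\<delta> > 0"
    and nonsing: "\<And>x l. (x, l) \<in> ball (xs, ls) \<delta> \<Longrightarrow>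
        bij (Fprime H x l) \<and> onorm (inv (Fprime H x l)) \<le> M"
    and \<mu>hat_pos: "\<mu>hat > 0"
    and traj_lip: "\<exists>L. \<forall>\<mu>1\<in>{0<..\<mu>hat}. \<forall>\<mu>2\<in>{0<..\<mu>hat}.
        norm ((xmu \<mu>1, lmu \<mu>1) - (xmu \<mu>2, lmu \<mu>2)) \<le> L * \<bar>\<mu>1 - \<mu>2\<bar>"
    and traj_pos: "\<And>\<mu>. \<mu> \<in> {0<..\<mu>hat} \<Longrightarrow> (\<forall>i. xmu \<mu> $ i > 0 \<and> lmu \<mu> $ i > 0)"
    and traj_ball: "\<And>\<mu>. \<mu> \<in> {0<..\<mu>hat} \<Longrightarrow> (xmu \<mu>, lmu \<mu>) \<in> ball (xs, ls) \<delta>"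
    and traj_eq: "\<And>\<mu>. \<mu> \<in> {0<..\<mu>hat} \<Longrightarrow> Fmu g \<mu> (xmu \<mu>) (lmu \<mu>) = 0"
    and traj_close: "\<And>\<mu>. \<mu> \<in> {0<..\<mu>hat} \<Longrightarrow> norm ((xmu \<mu>, lmu \<mu>) - (xs, ls)) \<le> C4 * \<mu>"
    and \<sigma>: "0 < \<sigma>" "\<sigma> < 1"
  shows
    "(\<forall>\<mu>>0. \<forall>x l dx dl. (x, l) \<in> ball (xs, ls) \<delta> \<and> (\<forall>i. x$i > 0) \<and> (\<forall>i. l$i > 0)
        \<and> Fprime H x l (dx, dl) = - Fmu g (\<sigma> * \<mu>) x l \<longrightarrow>
        (\<forall>i. denom H x l i \<noteq> 0 \<longrightarrow>
           DxS g H (\<sigma> * \<mu>) x l i - dx$i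
             = x$i / denom H x l i * (\<Sum>j\<in>UNIV - {i}. (H x)$i$j * dx$j)))
     \<and> (\<forall>C1>0. \<exists>\<rho>>0. \<exists>\<mu>bar. 0 < \<mu>bar \<and> \<mu>bar \<le> \<mu>hat \<and> (\<exists>c C. 0 < c \<and> c \<le> C \<and>
          (\<forall>\<mu> x l dx dl. 0 < \<mu> \<and> \<mu> \<le> \<mu>bar \<and> (x, l) \<in> ball (xs, ls) \<delta>
             \<and> (\<forall>i. x$i > 0) \<and> (\<forall>i. l$i > 0)
             \<and> norm ((x, l) - (xmu \<mu>, lmu \<mu>)) < \<rho>
             \<and> norm (Fmu g \<mu> x l) \<le> C1 * \<mu>
             \<and> Fprime H x l (dx, dl) = - Fmu g (\<sigma> * \<mu>) x l \<longrightarrow>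
               (\<forall>i. denom H x l i \<noteq> 0 \<and> c \<le> inverse (denom H x l i) \<and> inverse (denom H x l i) \<le> C)
             \<and> (\<forall>i. xs$i = 0 \<longrightarrow> \<bar>DxS g H (\<sigma> * \<mu>) x l i - dx$i\<bar> \<le> C * \<mu>^2))))"
proof (rule conjI)
  show "\<forall>\<mu>>0. \<forall>x l dx dl. (x, l) \<in> ball (xs, ls) \<delta> \<and> (\<forall>i. x$i > 0) \<and> (\<forall>i. l$i > 0)
        \<and> Fprime H x l (dx, dl) = - Fmu g (\<sigma> * \<mu>) x l \<longrightarrow>
        (\<forall>i. denom H x l i \<noteq> 0 \<longrightarrow>
           DxS g H (\<sigma> * \<mu>) x l i - dx$i
             = x$i / denom H x l i * (\<Sum>j\<in>UNIV - {i}. (H x)$i$j * dx$j))"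
    using part1 by blast
next
  show "\<forall>C1>0. \<exists>\<rho>>0. \<exists>\<mu>bar. 0 < \<mu>bar \<and> \<mu>bar \<le> \<mu>hat \<and> (\<exists>c C. 0 < c \<and> c \<le> C \<and>
          (\<forall>\<mu> x l dx dl. 0 < \<mu> \<and> \<mu> \<le> \<mu>bar \<and> (x, l) \<in> ball (xs, ls) \<delta>
             \<and> (\<forall>i. x$i > 0) \<and> (\<forall>i. l$i > 0)
             \<and> norm ((x, l) - (xmu \<mu>, lmu \<mu>)) < \<rho>
             \<and> norm (Fmu g \<mu> x l) \<le> C1 * \<mu>
             \<and> Fprime H x l (dx, dl) = - Fmu g (\<sigma> * \<mu>) x l \<longrightarrow>
               (\<forall>i. denom H x l i \<noteq> 0 \<and> c \<le> inverse (denom H x l i) \<and> inverse (denom H x l i) \<le> C)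
             \<and> (\<forall>i. xs$i = 0 \<longrightarrow> \<bar>DxS g H (\<sigma> * \<mu>) x l i - dx$i\<bar> \<le> C * \<mu>^2)))"
  proof (intro allI impI)
    fix C1 :: real assume C1: "C1 > 0"
    obtain m D r where m: "0 < m" and r: "0 < r" and nb: "\<And>x l. dist (x,l) (xs,ls) < r \<Longrightarrow>
       (\<forall>i. m \<le> denom H x l i \<and> denom H x l i \<le> D) \<and> (\<forall>i. xs$i = 0 \<longrightarrow> ls$i/2 < l$i)
       \<and> norm (H x - H xs) < 1"
      using nbhd[OF hess_cont pd_II xs_nonneg compl strict_compl] by blast
    have mD: "m \<le> D" using nb[of xs ls] r by auto
    have M0: "0 \<le> M" using nonsing[of xs ls] \<delta>_pos M_nonneg by auto
    define s0 where "s0 = Min (range (\<lambda>i. xs$i + ls$i))"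
    have s0: "s0 > 0" unfolding s0_def using strict_compl by (simp add: Min_gr_iff)
    have s0le: "s0 \<le> xs$i + ls$i" for i unfolding s0_def by simp
    define N where "N = real CARD('n)"
    define Hb where "Hb = norm (H xs) + 1"
    define K where "K = (1/m) * (2*(1+C1)/s0) * (N*Hb) * (M*(C1+N))"
    define \<mu>bar where "\<mu>bar = min \<mu>hat (r/(2*(\<bar>C4\<bar>+1)))"
    have \<mu>bar: "0 < \<mu>bar" "\<mu>bar \<le> \<mu>hat" using \<mu>hat_pos r by (auto simp: \<mu>bar_def)
    have key: "(\<forall>i. denom H x l i \<noteq> 0 \<and> 1/D \<le> inverse (denom H x l i) \<and> inverse (denom H x l i) \<le> max (1/m) K)
             \<and> (\<forall>i. xs$i = 0 \<longrightarrow> \<bar>DxS g H (\<sigma> * \<mu>) x l i - dx$i\<bar> \<le> max (1/m) K * \<mu>^2)"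
      if h: "0 < \<mu>" "\<mu> \<le> \<mu>bar" "(x, l) \<in> ball (xs, ls) \<delta>"
             "\<forall>i. x$i > 0" "\<forall>i. l$i > 0"
             "norm ((x, l) - (xmu \<mu>, lmu \<mu>)) < r/2"
             "norm (Fmu g \<mu> x l) \<le> C1 * \<mu>"
             "Fprime H x l (dx, dl) = - Fmu g (\<sigma> * \<mu>) x l" for \<mu> x l dx dl
    proof -
      have \<mu>in: "\<mu> \<in> {0<..\<mu>hat}" using h(1,2) \<mu>bar by auto
      have "\<mu> * (2*(\<bar>C4\<bar>+1)) \<le> r" using h(2) unfolding \<mu>bar_def
        by (simp add: pos_le_divide_eq)
      then have a1: "(\<bar>C4\<bar>+1) * \<mu> \<le> r/2" by (simp add: algebra_simps)
      have a2: "C4 * \<mu> \<le> \<bar>C4\<bar> * \<mu>" using h(1) by (simp add: mult_right_mono)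
      have a3: "\<bar>C4\<bar> * \<mu> \<le> (\<bar>C4\<bar>+1) * \<mu>" using h(1) by (simp add: algebra_simps)
      have C4\<mu>: "C4 * \<mu> \<le> r/2" using a1 a2 a3 by linarith
      have "dist (x,l) (xs,ls) \<le> dist (x,l) (xmu \<mu>, lmu \<mu>) + dist (xmu \<mu>, lmu \<mu>) (xs,ls)"
        by (rule dist_triangle)
      also have "\<dots> < r/2 + C4 * \<mu>" using h(6) traj_close[OF \<mu>in] by (simp add: dist_norm)
      finally have dr: "dist (x,l) (xs,ls) < r" using C4\<mu> by linarith
      note NB = nb[OF dr]
      have den: "m \<le> denom H x l i" "denom H x l i \<le> D" for i using NB by auto
      have part_a: "\<forall>i. denom H x l i \<noteq> 0 \<and> 1/D \<le> inverse (denom H x l i) \<and> inverse (denom H x l i) \<le> max (1/m) K"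
      proof
        fix i
        have dp: "denom H x l i > 0" using den(1)[of i] m by linarith
        have "1/D \<le> 1 / denom H x l i" using den(2)[of i] dp by (simp add: frac_le)
        moreover have "1 / denom H x l i \<le> 1/m" using den(1)[of i] m by (simp add: frac_le)
        ultimately show "denom H x l i \<noteq> 0 \<and> 1/D \<le> inverse (denom H x l i) \<and> inverse (denom H x l i) \<le> max (1/m) K"
          using dp by (simp add: inverse_eq_divide)
      qed
      have Fdiff: "Fmu g (\<sigma> * \<mu>) x l = Fmu g \<mu> x l + (0, (\<chi> i. (1-\<sigma>)*\<mu>))"
        by (simp add: Fmu_def vec_eq_iff algebra_simps)
      have nv: "norm ((\<chi> i. (1-\<sigma>)*\<mu>)::real^'n) \<le> N * \<mu>"
      proof -
        have "norm ((\<chi> i. (1-\<sigma>)*\<mu>)::real^'n) \<le> (\<Sum>i\<in>(UNIV::'n set). \<bar>(1-\<sigma>)*\<mu>\<bar>)"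
          using norm_le_l1_cart[of "(\<chi> i. (1-\<sigma>)*\<mu>)::real^'n"] by simp
        also have "\<dots> = N * ((1-\<sigma>)*\<mu>)" using \<sigma> h(1) by (simp add: N_def)
        also have "\<dots> \<le> N * \<mu>" using \<sigma> h(1) by (simp add: N_def mult_left_mono)
        finally show ?thesis .
      qed
      have nF: "norm (Fmu g (\<sigma> * \<mu>) x l) \<le> (C1 + N) * \<mu>"
      proof -
        have "norm (Fmu g (\<sigma> * \<mu>) x l) \<le> norm (Fmu g \<mu> x l) + norm ((0::real^'n), (\<chi> i. (1-\<sigma>)*\<mu>)::real^'n)"
          unfolding Fdiff by (rule norm_triangle_ineq)
        also have "\<dots> \<le> C1 * \<mu> + N * \<mu>" using h(7) nv by (simp add: norm_Pair1)
        finally show ?thesis by (simp add: algebra_simps)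
      qed
      have ns: "bij (Fprime H x l) \<and> onorm (inv (Fprime H x l)) \<le> M" using nonsing h(3) by blast
      have ndxdl: "norm (dx, dl) \<le> M * norm (- Fmu g (\<sigma> * \<mu>) x l)"
        using newton_bound[OF conjunct1[OF ns] conjunct2[OF ns] h(8)] .
      have ndx: "norm dx \<le> M * ((C1 + N) * \<mu>)"
      proof -
        have "norm dx \<le> norm (dx, dl)" by (rule norm_fst_le)
        also have "\<dots> \<le> M * norm (Fmu g (\<sigma> * \<mu>) x l)" using ndxdl by simp
        also have "\<dots> \<le> M * ((C1 + N) * \<mu>)" using nF M0 by (simp add: mult_left_mono)
        finally show ?thesis .
      qed
      have Hent: "\<bar>(H x)$i$j\<bar> \<le> Hb" for i j
      proof -
        have "\<bar>(H x)$i$j\<bar> \<le> norm ((H x)$i)" by (rule component_le_norm_cart)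
        also have "\<dots> \<le> norm (H x)" by (rule Finite_Cartesian_Product.norm_nth_le)
        also have "\<dots> \<le> norm (H xs) + norm (H x - H xs)" by (metis norm_triangle_sub add.commute)
        also have "\<dots> \<le> Hb" using NB by (simp add: Hb_def)
        finally show ?thesis .
      qed
      have part_b: "\<forall>i. xs$i = 0 \<longrightarrow> \<bar>DxS g H (\<sigma> * \<mu>) x l i - dx$i\<bar> \<le> max (1/m) K * \<mu>^2"
      proof (intro allI impI)
        fix i assume act: "xs$i = 0"
        have dp: "denom H x l i > 0" using den(1)[of i] m by linarith
        define S where "S = (\<Sum>j\<in>UNIV - {i}. (H x)$i$j * dx$j)"
        have eq: "DxS g H (\<sigma> * \<mu>) x l i - dx$i = x$i / denom H x l i * S"
          unfolding S_def using part1[OF h(8)] dp by simp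
        have xi: "x$i \<le> 2*(1+C1)/s0 * \<mu>"
        proof -
          have "\<bar>(snd (Fmu g \<mu> x l))$i\<bar> \<le> norm (snd (Fmu g \<mu> x l))" by (rule component_le_norm_cart)
          also have "\<dots> \<le> norm (Fmu g \<mu> x l)" by (metis norm_snd_le prod.collapse)
          finally have "\<bar>l$i * x$i - \<mu>\<bar> \<le> C1 * \<mu>" using h(7) by (simp add: Fmu_def)
          then have lx: "l$i * x$i \<le> (1+C1) * \<mu>" by (simp add: algebra_simps abs_le_iff)
          have "s0/2 < l$i" using NB act s0le[of i] by force
          then have "s0/2 * x$i \<le> l$i * x$i" using h(4) by (simp add: mult_right_mono less_imp_le)
          with lx have "s0/2 * x$i \<le> (1+C1) * \<mu>" by linarith
          then show ?thesis using s0 by (simp add: field_simps)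
        qed
        have Sb: "\<bar>S\<bar> \<le> N * Hb * norm dx"
        proof -
          have "\<bar>S\<bar> \<le> (\<Sum>j\<in>UNIV - {i}. \<bar>(H x)$i$j * dx$j\<bar>)" unfolding S_def by (rule sum_abs)
          also have "\<dots> \<le> (\<Sum>j\<in>UNIV - {i}. Hb * norm dx)"
          proof (rule sum_mono)
            fix j
            have "\<bar>(H x)$i$j * dx$j\<bar> = \<bar>(H x)$i$j\<bar> * \<bar>dx$j\<bar>" by (simp add: abs_mult)
            also have "\<dots> \<le> Hb * norm dx"
              by (rule mult_mono[OF Hent component_le_norm_cart]) (auto simp: Hb_def)
            finally show "\<bar>(H x)$i$j * dx$j\<bar> \<le> Hb * norm dx" .
          qed
          also have "\<dots> \<le> (\<Sum>j\<in>(UNIV::'n set). Hb * norm dx)"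
            by (rule sum_mono2) (auto simp: Hb_def)
          also have "\<dots> = N * Hb * norm dx" by (simp add: N_def)
          finally show ?thesis .
        qed
        have "\<bar>DxS g H (\<sigma> * \<mu>) x l i - dx$i\<bar> = x$i * inverse (denom H x l i) * \<bar>S\<bar>"
          unfolding eq using h(4) dp by (simp add: abs_mult divide_inverse less_imp_le)
        also have "\<dots> \<le> (2*(1+C1)/s0 * \<mu>) * (1/m) * (N * Hb * (M * ((C1 + N) * \<mu>)))"
        proof (intro mult_mono)
          show "x$i \<le> 2*(1+C1)/s0 * \<mu>" by (rule xi)
          show "inverse (denom H x l i) \<le> 1/m" using den(1)[of i] m by (simp add: inverse_eq_divide frac_le)
          show "\<bar>S\<bar> \<le> N * Hb * (M * ((C1 + N) * \<mu>))"
            using Sb ndx by (smt (verit) mult_left_mono N_def Hb_def of_nat_0_le_iff norm_ge_zero mult_nonneg_nonneg)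
        qed (use h(4) dp C1 s0 h(1) m in auto)
        also have "\<dots> = K * \<mu>^2" by (simp add: K_def power2_eq_square field_simps)
        also have "\<dots> \<le> max (1/m) K * \<mu>^2" by (simp add: mult_right_mono)
        finally show "\<bar>DxS g H (\<sigma> * \<mu>) x l i - dx$i\<bar> \<le> max (1/m) K * \<mu>^2" .
      qed
      show ?thesis using part_a part_b by blast
    qed
    show "\<exists>\<rho>>0. \<exists>\<mu>bar. 0 < \<mu>bar \<and> \<mu>bar \<le> \<mu>hat \<and> (\<exists>c C. 0 < c \<and> c \<le> C \<and>
          (\<forall>\<mu> x l dx dl. 0 < \<mu> \<and> \<mu> \<le> \<mu>bar \<and> (x, l) \<in> ball (xs, ls) \<delta>
             \<and> (\<forall>i. x$i > 0) \<and> (\<forall>i. l$i > 0)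
             \<and> norm ((x, l) - (xmu \<mu>, lmu \<mu>)) < \<rho>
             \<and> norm (Fmu g \<mu> x l) \<le> C1 * \<mu>
             \<and> Fprime H x l (dx, dl) = - Fmu g (\<sigma> * \<mu>) x l \<longrightarrow>
               (\<forall>i. denom H x l i \<noteq> 0 \<and> c \<le> inverse (denom H x l i) \<and> inverse (denom H x l i) \<le> C)
             \<and> (\<forall>i. xs$i = 0 \<longrightarrow> \<bar>DxS g H (\<sigma> * \<mu>) x l i - dx$i\<bar> \<le> C * \<mu>^2)))"
    proof -
      have A1: "0 < r/2" using r by simp
      have A2: "0 < 1/D" using m mD by simp
      have "1/D \<le> 1/m" using m mD by (simp add: frac_le)
      then have A3: "1/D \<le> max (1/m) K" by linarith
      have KK: "\<forall>\<mu> x l dx dl. 0 < \<mu> \<and> \<mu> \<le> \<mu>bar \<and> (x, l) \<in> ball (xs, ls) \<delta>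
             \<and> (\<forall>i. x$i > 0) \<and> (\<forall>i. l$i > 0)
             \<and> norm ((x, l) - (xmu \<mu>, lmu \<mu>)) < r/2
             \<and> norm (Fmu g \<mu> x l) \<le> C1 * \<mu>
             \<and> Fprime H x l (dx, dl) = - Fmu g (\<sigma> * \<mu>) x l \<longrightarrow>
               (\<forall>i. denom H x l i \<noteq> 0 \<and> 1/D \<le> inverse (denom H x l i) \<and> inverse (denom H x l i) \<le> max (1/m) K)
             \<and> (\<forall>i. xs$i = 0 \<longrightarrow> \<bar>DxS g H (\<sigma> * \<mu>) x l i - dx$i\<bar> \<le> max (1/m) K * \<mu>^2)"
        using key by blast
      show ?thesis
        apply (rule exI[of _ "r/2"], rule conjI[OF A1], rule exI[of _ \<mu>bar], rule conjI[OF \<mu>bar(1)], rule conjI[OF \<mu>bar(2)])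
        apply (rule exI[of _ "1/D"], rule exI[of _ "max (1/m) K"], rule conjI[OF A2], rule conjI[OF A3])
        by (rule KK)
    qed
  qed
qed

end
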